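(* Let $\mathcal{X}\subset\mathbb{R}^d$ be a full-dimensional polytope with vertex set $\mathcal{V}$, let ${\bm{u}}\in\mathbb{R}^d$, and let $B,B'\subseteq\mathcal{V}$ be affine bases of $\mathcal{X}$ (sets of $d+1$ affinely independent points) such that $B$ is an optimal spanning set of ${\bm{u}}$. Then ${\bm{v}}(B)\ge{\bm{v}}(B')$ coordinatewise.
   Context: For ${\bm{u}}\in\mathbb{R}^d$ write ${\bm{x}}\succeq{\bm{x}}'$ if $\langle{\bm{u}},{\bm{x}}\rangle\ge\langle{\bm{u}},{\bm{x}}'\rangle$, and $B_{\succeq{\bm{x}}}=\{{\bm{x}}'\in B:\langle{\bm{u}},{\bm{x}}'-{\bm{x}}\rangle\ge0\}$. A finite $B\subseteq\mathcal{X}$ is an optimal spanning set of ${\bm{u}}$ if every vertex ${\bm{x}}\in\mathcal{V}$ lies in the affine hull of $B_{\succeq{\bm{x}}}$. For $B=\{{\bm{x}}_0,\dots,{\bm{x}}_d\}$ with ${\bm{x}}_0\succeq\dots\succeq{\bm{x}}_d$, define ${\bm{v}}(B)=(\langle{\bm{u}},{\bm{x}}_0\rangle,\dots,\langle{\bm{u}},{\bm{x}}_d\rangle)\in\mathbb{R}^{d+1}$. *)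

theory Defs
  imports "HOL-Analysis.Analysis" "HOL-Library.Multiset"
begin

definition vertices :: "'a::euclidean_space set \<Rightarrow> 'a set" where
  "vertices X = {x. x extreme_point_of X}"

definition affine_basis :: "'a::euclidean_space set \<Rightarrow> bool" where
  "affine_basis B \<longleftrightarrow> finite B \<and> card B = DIM('a) + 1 \<and> \<not> affine_dependent B"

definition optimal_spanning_set :: "'a::euclidean_space set \<Rightarrow> 'a \<Rightarrow> 'a set \<Rightarrow> bool" where
  "optimal_spanning_set X u B \<longleftrightarrow> finite B \<and> B \<subseteq> X \<and>
     (\<forall>x \<in> vertices X. x \<in> affine hull {x' \<in> B. inner u (x' - x) \<ge> 0})"

definition vvec :: "'a::euclidean_space \<Rightarrow> 'a set \<Rightarrow> real list" where
  "vvec u B = rev (sorted_list_of_multiset (image_mset (\<lambda>x. inner u x) (mset_set B)))"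

end

theory Submission
  imports Defs
begin

lemma card_le_aff:
  fixes S T :: "'a::euclidean_space set"
  assumes "finite S" "\<not> affine_dependent T" "T \<subseteq> affine hull S"
  shows "card T \<le> card S"
proof -
  have "aff_dim T \<le> aff_dim (affine hull S)" using aff_dim_subset[OF assms(3)] .
  also have "\<dots> \<le> int (card S) - 1" using aff_dim_le_card[OF assms(1)] by simp
  finally show ?thesis using aff_dim_affine_independent[OF assms(2)] by linarith
qed

lemma vvec_length: "finite B \<Longrightarrow> length (vvec u B) = card B"
  unfolding vvec_def
  by (metis length_rev size_mset mset_sorted_list_of_multiset size_image_mset size_mset_set)

lemma vvec_count:
  assumes "finite B"
  shows "length (filter (\<lambda>y. y \<ge> t) (vvec u B)) = card {b\<in>B. inner u b \<ge> t}"
proof -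
  have "length (filter (\<lambda>y. y \<ge> t) (vvec u B)) = size (mset (filter (\<lambda>y. y \<ge> t) (vvec u B)))"
    by (metis size_mset)
  also have "\<dots> = size (filter_mset (\<lambda>y. y \<ge> t) (image_mset (\<lambda>x. inner u x) (mset_set B)))"
    unfolding vvec_def by (simp add: mset_filter)
  also have "\<dots> = size (filter_mset (\<lambda>x. inner u x \<ge> t) (mset_set B))"
    by (simp add: filter_mset_image_mset)
  also have "\<dots> = card {b\<in>B. inner u b \<ge> t}"
    using assms by simp
  finally show ?thesis .
qed

lemma vvec_sorted:
  assumes "j \<le> i" "i < length (vvec u B)"
  shows "vvec u B ! i \<le> vvec u B ! j"
proof -
  define xs where "xs = sorted_list_of_multiset (image_mset (\<lambda>x. inner u x) (mset_set B))"
  have s: "sorted xs" unfolding xs_def by simp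
  have l: "i < length xs" using assms unfolding vvec_def xs_def by simp
  have "xs ! (length xs - Suc i) \<le> xs ! (length xs - Suc j)"
    using s l assms(1) by (intro sorted_nth_mono) auto
  then show ?thesis unfolding vvec_def xs_def[symmetric] using l assms by (simp add: rev_nth)
qed

lemma count_ge:
  assumes "i < length (vvec u B)" "vvec u B ! i \<ge> t"
  shows "Suc i \<le> length (filter (\<lambda>y. y \<ge> t) (vvec u B))"
proof -
  have "{0..i} \<subseteq> {j. j < length (vvec u B) \<and> vvec u B ! j \<ge> t}"
    using assms vvec_sorted[of _ i u B] by force
  then have "card {0..i} \<le> card {j. j < length (vvec u B) \<and> vvec u B ! j \<ge> t}"
    by (intro card_mono) auto
  then show ?thesis by (simp add: length_filter_conv_card)
qed

lemma count_lt:
  assumes "i < length (vvec u B)" "vvec u B ! i < t"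
  shows "length (filter (\<lambda>y. y \<ge> t) (vvec u B)) \<le> i"
proof -
  have "{j. j < length (vvec u B) \<and> vvec u B ! j \<ge> t} \<subseteq> {0..<i}"
  proof
    fix j assume "j \<in> {j. j < length (vvec u B) \<and> vvec u B ! j \<ge> t}"
    then have "j < length (vvec u B)" "vvec u B ! j \<ge> t" by auto
    moreover have "\<not> i \<le> j"
    proof
      assume "i \<le> j"
      then have "vvec u B ! j \<le> vvec u B ! i" using vvec_sorted \<open>j < length (vvec u B)\<close> by blast
      then show False using assms \<open>vvec u B ! j \<ge> t\<close> by linarith
    qed
    ultimately show "j \<in> {0..<i}" by auto
  qed
  then have "card {j. j < length (vvec u B) \<and> vvec u B ! j \<ge> t} \<le> card {0..<i}"
    by (intro card_mono) auto
  then show ?thesis by (simp add: length_filter_conv_card)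
qed

theorem mainTheorem12:
  fixes X :: "'a::euclidean_space set" and u :: 'a and B B' :: "'a set"
  assumes "polytope X"
    and "aff_dim X = int DIM('a)"
    and "B \<subseteq> vertices X" and "B' \<subseteq> vertices X"
    and "affine_basis B" and "affine_basis B'"
    and "optimal_spanning_set X u B"
  shows "length (vvec u B) = length (vvec u B') \<and>
         (\<forall>i < length (vvec u B). vvec u B' ! i \<le> vvec u B ! i)"
proof -
  have fB: "finite B" "card B = DIM('a) + 1" and fB': "finite B'" "card B' = DIM('a) + 1"
    and ind: "\<not> affine_dependent B'"
    using assms(5,6) unfolding affine_basis_def by auto
  have len: "length (vvec u B) = length (vvec u B')"
    using fB fB' by (simp add: vvec_length)
  have "vvec u B' ! i \<le> vvec u B ! i" if i: "i < length (vvec u B)" for i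
  proof (rule ccontr)
    assume nlt: "\<not> ?thesis"
    define t where "t = vvec u B' ! i"
    have lt: "vvec u B ! i < t" using nlt t_def by simp
    have c1: "card {b\<in>B. inner u b \<ge> t} \<le> i"
      using count_lt[OF i lt] vvec_count[OF fB(1)] by simp
    have c2: "Suc i \<le> card {b\<in>B'. inner u b \<ge> t}"
      using count_ge[of i u B' t] i len t_def vvec_count[OF fB'(1)] by simp
    have sub: "{b\<in>B'. inner u b \<ge> t} \<subseteq> affine hull {b\<in>B. inner u b \<ge> t}"
    proof
      fix x assume x: "x \<in> {b\<in>B'. inner u b \<ge> t}"
      then have "x \<in> vertices X" using assms(4) by auto
      then have "x \<in> affine hull {x' \<in> B. inner u (x' - x) \<ge> 0}"
        using assms(7) unfolding optimal_spanning_set_def by auto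
      moreover have "{x' \<in> B. inner u (x' - x) \<ge> 0} \<subseteq> {b\<in>B. inner u b \<ge> t}"
        using x by (auto simp: inner_diff_right)
      ultimately show "x \<in> affine hull {b\<in>B. inner u b \<ge> t}"
        using hull_mono by blast
    qed
    have "card {b\<in>B'. inner u b \<ge> t} \<le> card {b\<in>B. inner u b \<ge> t}"
      by (rule card_le_aff[OF _ affine_independent_subset[OF ind] sub]) (use fB in auto)
    then show False using c1 c2 by linarith
  qed
  then show ?thesis using len by blast
qed

end
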